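(* Let $n\ge3$. There exists no spherical $(2,2)$-design $C\subset\mathbb{S}^{n-1}$ with $|C|=\binom{n+1}{2}+1$.
   Context: For $n\ge 2$, let $P_i^{(n)}(t)$ be the normalized Gegenbauer polynomials: $P_0^{(n)}=1$, $P_1^{(n)}=t$, and $(i+n-2)P_{i+1}^{(n)}(t)=(2i+n-2)tP_i^{(n)}(t)-iP_{i-1}^{(n)}(t)$ for $i\ge1$. A spherical $(2,2)$-design is a finite nonempty $C\subset\mathbb{S}^{n-1}$ with $\sum_{x,y\in C}P_{2}^{(n)}(\langle x,y\rangle)=\sum_{x,y\in C}P_{4}^{(n)}(\langle x,y\rangle)=0$. *)

theory Defs
  imports "HOL-Analysis.Analysis"
begin

text \<open>Normalized Gegenbauer polynomials P_i^(n)(t):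
  P_0 = 1, P_1 = t, and (i+n-2) P_{i+1} = (2i+n-2) t P_i - i P_{i-1} for i >= 1.
  Writing i+1 for i, the recurrence reads
  P_{i+2} = ((2i+n) t P_{i+1} - (i+1) P_i) / (i+n-1).\<close>
fun gegenbauer :: "nat \<Rightarrow> nat \<Rightarrow> real \<Rightarrow> real" where
  "gegenbauer n 0 t = 1"
| "gegenbauer n (Suc 0) t = t"
| "gegenbauer n (Suc (Suc i)) t =
     (real (2 * i + n) * t * gegenbauer n (Suc i) t - real (i + 1) * gegenbauer n i t)
       / (real (i + n) - 1)"

definition spherical_22_design :: "(real ^ 'n) set \<Rightarrow> bool" where
  "spherical_22_design C \<longleftrightarrow>
     finite C \<and> C \<noteq> {} \<and> C \<subseteq> sphere 0 1 \<and>
     (\<Sum>x\<in>C. \<Sum>y\<in>C. gegenbauer CARD('n) 2 (x \<bullet> y)) = 0 \<and>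
     (\<Sum>x\<in>C. \<Sum>y\<in>C. gegenbauer CARD('n) 4 (x \<bullet> y)) = 0"

end

theory Submission
  imports Defs
begin


definition dl :: "'a \<Rightarrow> 'a \<Rightarrow> real" where "dl i j = (if i = j then 1 else 0)"

lemma dl_mult: "dl i j * x = (if i = j then x else 0)" "x * dl i j = (if i = j then x else 0)"
  by (simp_all add: dl_def)

lemma dl2: "dl i j * dl k l * x = (if i = j then (if k = l then x else 0) else 0)"
  by (simp add: dl_def)

lemma sum_if_const: "(\<Sum>l\<in>A. if P then f l else 0) = (if P then sum f A else 0)"
  by simp

lemma sum_S: "(\<Sum>i\<in>(UNIV::'n::finite set). \<Sum>j\<in>UNIV. \<Sum>k\<in>UNIV. \<Sum>l\<in>UNIV. (dl i j * dl k l + dl i k * dl j l + dl i l * dl j k) * F i j k l)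
   = (\<Sum>i\<in>UNIV. \<Sum>j\<in>UNIV. F i i j j + F i j i j + F i j j i)"
  by (simp add: distrib_right sum.distrib dl2 sum_if_const sum.delta sum.delta' cong: if_cong)

lemma SSq: "(\<Sum>i\<in>(UNIV::'n::finite set). \<Sum>j\<in>UNIV. \<Sum>k\<in>UNIV. \<Sum>l\<in>UNIV. (dl i j * dl k l + dl i k * dl j l + dl i l * dl j k)^2) = 3 * real CARD('n)^2 + 6 * real CARD('n)"
proof -
  have e: "\<And>P. (if P then (1::real) else 0) * (if P then 1 else 0) = (if P then 1 else 0)" by simp
  show ?thesis
  apply (simp only: power2_eq_square sum_S)
  apply (simp add: dl_def sum.distrib sum.delta sum.delta' eq_commute[of _ i for i] e cong: if_cong)
  apply (simp add: sum_distrib_left[symmetric])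
  done
qed



lemma swap4: "(\<Sum>x\<in>A. \<Sum>y\<in>B. \<Sum>i\<in>I. \<Sum>j\<in>J. f x y i j) = (\<Sum>i\<in>I. \<Sum>j\<in>J. \<Sum>x\<in>A. \<Sum>y\<in>B. (f x y i j :: real))"
proof -
  have "(\<Sum>x\<in>A. \<Sum>y\<in>B. \<Sum>i\<in>I. \<Sum>j\<in>J. f x y i j) = (\<Sum>x\<in>A. \<Sum>i\<in>I. \<Sum>y\<in>B. \<Sum>j\<in>J. f x y i j)"
    by (rule sum.cong[OF refl], rule sum.swap)
  also have "\<dots> = (\<Sum>i\<in>I. \<Sum>x\<in>A. \<Sum>y\<in>B. \<Sum>j\<in>J. f x y i j)" by (rule sum.swap)
  also have "\<dots> = (\<Sum>i\<in>I. \<Sum>x\<in>A. \<Sum>j\<in>J. \<Sum>y\<in>B. f x y i j)"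
    by (rule sum.cong[OF refl], rule sum.cong[OF refl], rule sum.swap)
  also have "\<dots> = (\<Sum>i\<in>I. \<Sum>j\<in>J. \<Sum>x\<in>A. \<Sum>y\<in>B. f x y i j)"
    by (rule sum.cong[OF refl], rule sum.swap)
  finally show ?thesis .
qed

lemma mom2_swap:
  fixes C :: "(real^'n) set"
  shows "(\<Sum>x\<in>C. \<Sum>y\<in>C. (x \<bullet> y)^2) = (\<Sum>i\<in>UNIV. \<Sum>j\<in>UNIV. (\<Sum>x\<in>C. x$i*x$j)^2)"
proof -
  have "(\<Sum>x\<in>C. \<Sum>y\<in>C. (x \<bullet> y)^2) = (\<Sum>x\<in>C. \<Sum>y\<in>C. \<Sum>i\<in>UNIV. \<Sum>j\<in>UNIV. (x$i*x$j)*(y$i*y$j))"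
    by (simp add: inner_vec_def power2_eq_square sum_product mult_ac)
  also have "\<dots> = (\<Sum>i\<in>UNIV. \<Sum>j\<in>UNIV. \<Sum>x\<in>C. \<Sum>y\<in>C. (x$i*x$j)*(y$i*y$j))" by (rule swap4)
  also have "\<dots> = (\<Sum>i\<in>UNIV. \<Sum>j\<in>UNIV. (\<Sum>x\<in>C. x$i*x$j)^2)"
    by (simp add: power2_eq_square sum_product)
  finally show ?thesis .
qed

lemma mom4_swap:
  fixes C :: "(real^'n) set"
  shows "(\<Sum>x\<in>C. \<Sum>y\<in>C. (x \<bullet> y)^4) = (\<Sum>i\<in>UNIV. \<Sum>j\<in>UNIV. \<Sum>k\<in>UNIV. \<Sum>l\<in>UNIV. (\<Sum>x\<in>C. x$i*x$j*x$k*x$l)^2)"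
proof -
  have "(\<Sum>x\<in>C. \<Sum>y\<in>C. (x \<bullet> y)^4) = (\<Sum>x\<in>C. \<Sum>y\<in>C. \<Sum>i\<in>UNIV. \<Sum>j\<in>UNIV. \<Sum>k\<in>UNIV. \<Sum>l\<in>UNIV. (x$i*x$j*x$k*x$l)*(y$i*y$j*y$k*y$l))"
    by (simp add: inner_vec_def power4_eq_xxxx sum_product sum_distrib_left sum_distrib_right mult_ac)
  also have "\<dots> = (\<Sum>i\<in>UNIV. \<Sum>j\<in>UNIV. \<Sum>x\<in>C. \<Sum>y\<in>C. \<Sum>k\<in>UNIV. \<Sum>l\<in>UNIV. (x$i*x$j*x$k*x$l)*(y$i*y$j*y$k*y$l))" by (rule swap4)
  also have "\<dots> = (\<Sum>i\<in>UNIV. \<Sum>j\<in>UNIV. \<Sum>k\<in>UNIV. \<Sum>l\<in>UNIV. \<Sum>x\<in>C. \<Sum>y\<in>C. (x$i*x$j*x$k*x$l)*(y$i*y$j*y$k*y$l))"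
    by (rule sum.cong[OF refl], rule sum.cong[OF refl], rule swap4)
  also have "\<dots> = (\<Sum>i\<in>UNIV. \<Sum>j\<in>UNIV. \<Sum>k\<in>UNIV. \<Sum>l\<in>UNIV. (\<Sum>x\<in>C. x$i*x$j*x$k*x$l)^2)"
    by (simp add: power2_eq_square sum_product)
  finally show ?thesis .
qed



lemma sq_sum_zero:
  fixes f :: "'a::finite \<Rightarrow> 'b::finite \<Rightarrow> real"
  assumes "(\<Sum>i\<in>(UNIV::'a::finite set). \<Sum>j\<in>(UNIV::'b::finite set). (f i j)^2) = 0"
  shows "f i j = 0"
proof -
  have "\<forall>i\<in>UNIV. (\<Sum>j\<in>UNIV. (f i j)^2) = 0"
    using assms by (subst sum_nonneg_eq_0_iff[symmetric]) (auto intro: sum_nonneg)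
  then have "(f i j)^2 = 0" by (simp add: sum_nonneg_eq_0_iff)
  then show ?thesis by simp
qed

lemma sq_sum_zero4:
  fixes f :: "'a::finite \<Rightarrow> 'a \<Rightarrow> 'a \<Rightarrow> 'a \<Rightarrow> real"
  assumes "(\<Sum>i\<in>(UNIV::'a::finite set). \<Sum>j\<in>UNIV. \<Sum>k\<in>UNIV. \<Sum>l\<in>UNIV. (f i j k l)^2) = 0"
  shows "f i j k l = 0"
proof -
  have "\<forall>i\<in>UNIV. (\<Sum>j\<in>UNIV. \<Sum>k\<in>UNIV. \<Sum>l\<in>UNIV. (f i j k l)^2) = 0"
    using assms by (subst sum_nonneg_eq_0_iff[symmetric]) (auto intro!: sum_nonneg)
  then have "\<forall>j\<in>UNIV. (\<Sum>k\<in>UNIV. \<Sum>l\<in>UNIV. (f i j k l)^2) = 0"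
    by (subst sum_nonneg_eq_0_iff[symmetric]) (auto intro!: sum_nonneg)
  then have "\<forall>k\<in>UNIV. (\<Sum>l\<in>UNIV. (f i j k l)^2) = 0"
    by (subst sum_nonneg_eq_0_iff[symmetric]) (auto intro!: sum_nonneg)
  then have "(f i j k l)^2 = 0" by (simp add: sum_nonneg_eq_0_iff)
  then show ?thesis by simp
qed

lemma unit_sq: "x \<in> sphere (0::real^'n) 1 \<Longrightarrow> (\<Sum>i\<in>UNIV. x$i * x$i) = 1"
proof -
  assume "x \<in> sphere (0::real^'n) 1"
  then have "x \<bullet> x = 1" by (simp add: norm_eq_1[symmetric])
  then show ?thesis by (simp add: inner_vec_def)
qed

lemma mom2:
  fixes C :: "(real^'n) set"
  assumes fin: "finite C" and sph: "C \<subseteq> sphere 0 1"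
    and S2: "(\<Sum>x\<in>C. \<Sum>y\<in>C. (x \<bullet> y)^2) = real (card C)^2 / real CARD('n)"
  shows "(\<Sum>x\<in>C. x$i*x$j) = real (card C) / real CARD('n) * dl i j"
proof -
  define a where "a = real (card C) / real CARD('n)"
  define M where "M i j = (\<Sum>x\<in>C. x$i*x$j)" for i j
  have tr: "(\<Sum>i\<in>UNIV. \<Sum>j\<in>UNIV. dl i j * M i j) = real (card C)"
  proof -
    have "(\<Sum>i\<in>UNIV. \<Sum>j\<in>UNIV. dl i j * M i j) = (\<Sum>i\<in>UNIV. M i i)"
      by (simp add: dl_mult sum.delta)
    also have "\<dots> = (\<Sum>x\<in>C. \<Sum>i\<in>UNIV. x$i*x$i)" unfolding M_def by (rule sum.swap)
    also have "\<dots> = (\<Sum>x\<in>C. 1)" using sph by (intro sum.cong refl) (rule unit_sq, blast)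
    finally show ?thesis by simp
  qed
  have dd: "(\<Sum>i\<in>(UNIV::'n set). \<Sum>j\<in>UNIV. dl i j * dl i j) = real CARD('n)"
    by (simp only: dl_mult) (simp add: dl_def sum.delta)
  have "(\<Sum>i\<in>UNIV. \<Sum>j\<in>UNIV. (M i j - a * dl i j)^2)
      = (\<Sum>i\<in>UNIV. \<Sum>j\<in>UNIV. (M i j)^2) - 2*a*(\<Sum>i\<in>UNIV. \<Sum>j\<in>UNIV. dl i j * M i j)
        + a^2 * (\<Sum>i\<in>(UNIV::'n set). \<Sum>j\<in>UNIV. dl i j * dl i j)"
  proof -
    have pt: "\<And>i j. (M i j - a*dl i j)^2 = (M i j)^2 - 2*a*(dl i j * M i j) + a^2*(dl i j*dl i j)"
      by (simp add: power2_eq_square algebra_simps)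
    show ?thesis by (simp only: pt sum.distrib sum_subtractf sum_distrib_left[symmetric])
  qed
  also have "\<dots> = 0"
    unfolding tr dd unfolding M_def mom2_swap[symmetric] S2 a_def by (simp add: field_simps power2_eq_square)
  finally have "M i j - a * dl i j = 0" by (rule sq_sum_zero)
  then show ?thesis unfolding M_def a_def by simp
qed

lemma SS: "(\<Sum>i\<in>(UNIV::'n::finite set). \<Sum>j\<in>UNIV. \<Sum>k\<in>UNIV. \<Sum>l\<in>UNIV. (dl i j * dl k l + dl i k * dl j l + dl i l * dl j k)*(dl i j * dl k l + dl i k * dl j l + dl i l * dl j k)) = 3 * real CARD('n)^2 + 6 * real CARD('n)"
  using SSq by (simp add: power2_eq_square)

lemma mom4:
  fixes C :: "(real^'n) set"
  assumes fin: "finite C" and sph: "C \<subseteq> sphere 0 1"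
    and S4: "(\<Sum>x\<in>C. \<Sum>y\<in>C. (x \<bullet> y)^4) = 3 * real (card C)^2 / (real CARD('n) * (real CARD('n) + 2))"
  shows "(\<Sum>x\<in>C. x$i*x$j*x$k*x$l) = real (card C) / (real CARD('n) * (real CARD('n) + 2)) * (dl i j * dl k l + dl i k * dl j l + dl i l * dl j k)"
proof -
  define a where "a = real (card C) / (real CARD('n) * (real CARD('n) + 2))"
  define T where "T i j k l = (\<Sum>x\<in>C. x$i*x$j*x$k*x$l)" for i j k l
  define D where "D i j k l = (dl i j * dl k l + dl i k * dl j l + dl i l * dl j k)" for i j k l :: 'n
  have tr: "(\<Sum>i\<in>UNIV. \<Sum>j\<in>UNIV. \<Sum>k\<in>UNIV. \<Sum>l\<in>UNIV. D i j k l * T i j k l) = 3 * real (card C)"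
  proof -
    have "(\<Sum>i\<in>UNIV. \<Sum>j\<in>UNIV. \<Sum>k\<in>UNIV. \<Sum>l\<in>UNIV. D i j k l * T i j k l)
        = (\<Sum>i\<in>UNIV. \<Sum>j\<in>UNIV. T i i j j + T i j i j + T i j j i)"
      unfolding D_def by (rule sum_S)
    also have "\<dots> = (\<Sum>i\<in>UNIV. \<Sum>j\<in>UNIV. 3 * (\<Sum>x\<in>C. (x$i*x$i)*(x$j*x$j)))"
      unfolding T_def by (intro sum.cong refl) (simp add: sum.distrib[symmetric] sum_distrib_left mult_ac)
    also have "\<dots> = 3 * (\<Sum>i\<in>UNIV. \<Sum>j\<in>UNIV. \<Sum>x\<in>C. (x$i*x$i)*(x$j*x$j))"
      by (simp add: sum_distrib_left)
    also have "(\<Sum>i\<in>UNIV. \<Sum>j\<in>UNIV. \<Sum>x\<in>C. (x$i*x$i)*(x$j*x$j)) = (\<Sum>i\<in>UNIV. \<Sum>x\<in>C. \<Sum>j\<in>UNIV. (x$i*x$i)*(x$j*x$j))"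
      by (intro sum.cong refl sum.swap)
    also have "\<dots> = (\<Sum>x\<in>C. \<Sum>i\<in>UNIV. \<Sum>j\<in>UNIV. (x$i*x$i)*(x$j*x$j))"
      by (rule sum.swap)
    also have "\<dots> = (\<Sum>x\<in>C. (\<Sum>i\<in>UNIV. x$i*x$i)*(\<Sum>j\<in>UNIV. x$j*x$j))"
      by (simp add: sum_product)
    also have "\<dots> = (\<Sum>x\<in>C. 1)" using sph by (intro sum.cong refl) (simp add: unit_sq subset_iff del: mem_sphere_0)
    finally show ?thesis by simp
  qed
  have dd: "(\<Sum>i\<in>UNIV. \<Sum>j\<in>UNIV. \<Sum>k\<in>UNIV. \<Sum>l\<in>UNIV. D i j k l * D i j k l) = 3 * real CARD('n)^2 + 6 * real CARD('n)"
    unfolding D_def by (rule SS)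
  have "(\<Sum>i\<in>UNIV. \<Sum>j\<in>UNIV. \<Sum>k\<in>UNIV. \<Sum>l\<in>UNIV. (T i j k l - a * D i j k l)^2)
      = (\<Sum>i\<in>UNIV. \<Sum>j\<in>UNIV. \<Sum>k\<in>UNIV. \<Sum>l\<in>UNIV. (T i j k l)^2) - 2*a*(\<Sum>i\<in>UNIV. \<Sum>j\<in>UNIV. \<Sum>k\<in>UNIV. \<Sum>l\<in>UNIV. D i j k l * T i j k l)
        + a^2 * (\<Sum>i\<in>UNIV. \<Sum>j\<in>UNIV. \<Sum>k\<in>UNIV. \<Sum>l\<in>UNIV. D i j k l * D i j k l)"
  proof -
    have pt: "\<And>i j k l. (T i j k l - a*D i j k l)^2 = (T i j k l)^2 - 2*a*(D i j k l * T i j k l) + a^2*(D i j k l*D i j k l)"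
      by (simp add: power2_eq_square algebra_simps)
    show ?thesis by (simp only: pt sum.distrib sum_subtractf sum_distrib_left[symmetric])
  qed
  also have "\<dots> = 0"
    proof -
    have key: "3*N^2/(n*(n+2)) - 2*(N/(n*(n+2)))*(3*N) + (N/(n*(n+2)))^2*(3*n^2+6*n) = 0"
      if "n > 0" for n N :: real
    proof -
      define d where "d = n*(n+2)"
      have d0: "d \<noteq> 0" using that unfolding d_def by simp
      have e: "3*n^2+6*n = 3*d" unfolding d_def by (simp add: algebra_simps power2_eq_square)
      have "(N/d)^2*(3*d) = 3*N^2/d" using d0 by (simp add: power2_eq_square field_simps)
      then show ?thesis unfolding e d_def[symmetric] by (simp add: field_simps power2_eq_square)
    qed
    show ?thesis
      unfolding tr dd unfolding T_def mom4_swap[symmetric] S4 a_def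
      by (rule key) simp
  qed
  finally have "T i j k l - a * D i j k l = 0" by (rule sq_sum_zero4)
  then show ?thesis unfolding T_def a_def D_def by simp
qed



lemma swap5: "(\<Sum>x\<in>A. \<Sum>i\<in>I. \<Sum>j\<in>J. \<Sum>k\<in>K. \<Sum>l\<in>L. f x i j k l) = (\<Sum>i\<in>I. \<Sum>j\<in>J. \<Sum>k\<in>K. \<Sum>l\<in>L. \<Sum>x\<in>A. (f x i j k l :: real))"
proof -
  have "(\<Sum>x\<in>A. \<Sum>i\<in>I. \<Sum>j\<in>J. \<Sum>k\<in>K. \<Sum>l\<in>L. f x i j k l) = (\<Sum>i\<in>I. \<Sum>x\<in>A. \<Sum>j\<in>J. \<Sum>k\<in>K. \<Sum>l\<in>L. f x i j k l)"
    by (rule sum.swap)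
  also have "\<dots> = (\<Sum>i\<in>I. \<Sum>j\<in>J. \<Sum>x\<in>A. \<Sum>k\<in>K. \<Sum>l\<in>L. f x i j k l)"
    by (intro sum.cong refl sum.swap)
  also have "\<dots> = (\<Sum>i\<in>I. \<Sum>j\<in>J. \<Sum>k\<in>K. \<Sum>x\<in>A. \<Sum>l\<in>L. f x i j k l)"
    by (intro sum.cong refl sum.swap)
  also have "\<dots> = (\<Sum>i\<in>I. \<Sum>j\<in>J. \<Sum>k\<in>K. \<Sum>l\<in>L. \<Sum>x\<in>A. f x i j k l)"
    by (intro sum.cong refl sum.swap)
  finally show ?thesis .
qed

lemma F2:
  fixes C :: "(real^'n) set"
  assumes mom: "\<And>i j. (\<Sum>x\<in>C. x$i*x$j) = a * dl i j"
  shows "(\<Sum>x\<in>C. (x \<bullet> u)*(x \<bullet> v)) = a * (u \<bullet> v)"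
proof -
  have "(\<Sum>x\<in>C. (x \<bullet> u)*(x \<bullet> v)) = (\<Sum>x\<in>C. \<Sum>i\<in>UNIV. \<Sum>j\<in>UNIV. (u$i* v$j)*(x$i*x$j))"
    by (simp add: inner_vec_def sum_product mult_ac)
  also have "\<dots> = (\<Sum>i\<in>UNIV. \<Sum>x\<in>C. \<Sum>j\<in>UNIV. (u$i* v$j)*(x$i*x$j))" by (rule sum.swap)
  also have "\<dots> = (\<Sum>i\<in>UNIV. \<Sum>j\<in>UNIV. \<Sum>x\<in>C. (u$i* v$j)*(x$i*x$j))" by (intro sum.cong refl sum.swap)
  also have "\<dots> = (\<Sum>i\<in>UNIV. \<Sum>j\<in>UNIV. (u$i* v$j)*(a * dl i j))"
    by (simp add: sum_distrib_left[symmetric] mom)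
  also have "\<dots> = (\<Sum>i\<in>UNIV. \<Sum>j\<in>UNIV. (a*(u$i * v$j))*dl i j)"
    by (simp add: mult_ac)
  also have "\<dots> = a * (u \<bullet> v)"
    by (simp only: dl_mult sum.delta finite UNIV_I if_True) (simp add: inner_vec_def sum_distrib_left)
  finally show ?thesis .
qed

lemma F4:
  fixes C :: "(real^'n) set"
  assumes mom: "\<And>i j k l. (\<Sum>x\<in>C. x$i*x$j*x$k*x$l) = b * (dl i j * dl k l + dl i k * dl j l + dl i l * dl j k)"
  shows "(\<Sum>x\<in>C. (x \<bullet> u)^2*(x \<bullet> v)^2) = b * ((u \<bullet> u)*(v \<bullet> v) + 2*(u \<bullet> v)^2)"
proof -
  have "(\<Sum>x\<in>C. (x \<bullet> u)^2*(x \<bullet> v)^2) = (\<Sum>x\<in>C. \<Sum>i\<in>UNIV. \<Sum>j\<in>UNIV. \<Sum>k\<in>UNIV. \<Sum>l\<in>UNIV. (u$i*u$j* v$k* v$l)*(x$i*x$j*x$k*x$l))"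
  proof (rule sum.cong[OF refl])
    fix x
    have "(x \<bullet> u)^2*(x \<bullet> v)^2 = (\<Sum>i\<in>UNIV. \<Sum>j\<in>UNIV. \<Sum>k\<in>UNIV. \<Sum>l\<in>UNIV. (x$i*u$i)*(x$j*u$j)*(x$k * v$k)*(x$l * v$l))"
    proof -
      have "(x \<bullet> u)^2*(x \<bullet> v)^2 = (\<Sum>l\<in>UNIV. x$l * v$l)*(\<Sum>k\<in>UNIV. x$k * v$k)*(\<Sum>j\<in>UNIV. x$j*u$j)*(\<Sum>i\<in>UNIV. x$i*u$i)"
        by (simp add: inner_vec_def power2_eq_square mult_ac)
      also have "\<dots> = (\<Sum>i\<in>UNIV. \<Sum>j\<in>UNIV. \<Sum>k\<in>UNIV. \<Sum>l\<in>UNIV. (x$l * v$l)*(x$k * v$k)*(x$j*u$j)*(x$i*u$i))"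
        by (simp only: sum_distrib_left sum_distrib_right)
      finally show ?thesis by (simp add: mult_ac)
    qed
    also have "\<dots> = (\<Sum>i\<in>UNIV. \<Sum>j\<in>UNIV. \<Sum>k\<in>UNIV. \<Sum>l\<in>UNIV. (u$i*u$j* v$k* v$l)*(x$i*x$j*x$k*x$l))"
      by (simp add: mult_ac)
    finally show "(x \<bullet> u)^2*(x \<bullet> v)^2 = \<dots>" .
  qed
  also have "\<dots> = (\<Sum>i\<in>UNIV. \<Sum>j\<in>UNIV. \<Sum>k\<in>UNIV. \<Sum>l\<in>UNIV. \<Sum>x\<in>C. (u$i*u$j* v$k* v$l)*(x$i*x$j*x$k*x$l))" by (rule swap5)
  also have "\<dots> = (\<Sum>i\<in>UNIV. \<Sum>j\<in>UNIV. \<Sum>k\<in>UNIV. \<Sum>l\<in>UNIV. (dl i j * dl k l + dl i k * dl j l + dl i l * dl j k) * (b*(u$i*u$j* v$k* v$l)))"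
  proof -
    have "\<And>i j k l. (\<Sum>x\<in>C. (u$i*u$j* v$k* v$l)*(x$i*x$j*x$k*x$l)) = (u$i*u$j* v$k* v$l)*(\<Sum>x\<in>C. x$i*x$j*x$k*x$l)"
      by (rule sum_distrib_left[symmetric])
    then show ?thesis by (simp only: mom) (simp add: mult_ac)
  qed
  also have "\<dots> = (\<Sum>i\<in>UNIV. \<Sum>j\<in>UNIV. b*(u$i*u$i* v$j* v$j) + b*(u$i*u$j* v$i* v$j) + b*(u$i*u$j* v$j* v$i))"
    by (rule sum_S)
  also have "\<dots> = b * ((u \<bullet> u)*(v \<bullet> v) + 2*(u \<bullet> v)^2)"
    by (simp add: inner_vec_def power2_eq_square sum_product sum.distrib sum_distrib_left algebra_simps) (rule sum.swap)
  finally show ?thesis .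
qed



lemma comb:
  fixes C :: "'a set" and M :: "'a \<Rightarrow> 'a \<Rightarrow> real"
  assumes fin: "finite C" and cardC: "real (card C) = N" and n3: "n \<ge> 3"
    and hN: "2*N = n*(n+1)+2" and al: "al = N/(n*(n+2))"
    and sym: "\<And>x y. x\<in>C \<Longrightarrow> y\<in>C \<Longrightarrow> M x y = M y x"
    and diag: "\<And>x. x\<in>C \<Longrightarrow> M x x = 1"
    and row: "\<And>x. x\<in>C \<Longrightarrow> (\<Sum>z\<in>C. M x z) = N/n"
    and sq: "\<And>x y. x\<in>C \<Longrightarrow> y\<in>C \<Longrightarrow> (\<Sum>z\<in>C. M x z * M z y) = al*(1 + 2*M x y)"
  shows "\<exists>\<epsilon>. (\<forall>x\<in>C. \<epsilon> x = 1 \<or> \<epsilon> x = -1) \<and> (\<Sum>x\<in>C. \<epsilon> x) = 0 \<and>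
     (\<forall>x\<in>C. \<forall>y\<in>C. M x y = 1/n + 2*al*((if x = y then 1 else 0) - (1 + \<epsilon> x * \<epsilon> y)/N))"
proof -
  have Npos: "N > 0" using hN n3 by (smt (verit) mult_nonneg_nonneg)
  define p where "p = n/(2*N)"
  define q where "q = n*(n+2)/(2*N)"
  define d where "d x y = (if x = y then 1 else (0::real))" for x y :: 'a
  define R where "R x y = d x y + p - q * M x y" for x y
  have nn0: "n*(n+2) \<noteq> 0" using n3 by simp
  have qal: "q * al = 1/2" unfolding q_def al using nn0 Npos by simp
  have pq: "p + N*p^2 - 2*p*q*N/n + q^2*al = 0"
  proof -
    have "q^2*al = q/2" using qal by (simp add: power2_eq_square)
    moreover have "p + N*p^2 - 2*p*q*N/n + q/2 = 0"
      unfolding p_def q_def using n3 Npos by (simp add: field_simps power2_eq_square)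
    ultimately show ?thesis by simp
  qed
  have s1: "(\<Sum>z\<in>C. d x z * d z y) = d x y" if "x\<in>C" for x y
  proof -
    have "\<And>z. d x z * d z y = (if z = x then d x y else 0)" by (simp add: d_def)
    then show ?thesis using fin that by (simp add: sum.delta)
  qed
  have s2: "(\<Sum>z\<in>C. d x z) = 1" "(\<Sum>z\<in>C. d z x) = 1" if "x\<in>C" for x
  proof -
    have "\<And>z. d x z = (if z = x then 1 else 0)" "\<And>z. d z x = (if z = x then 1 else 0)" by (auto simp add: d_def)
    then show "(\<Sum>z\<in>C. d x z) = 1" "(\<Sum>z\<in>C. d z x) = 1" using fin that by (simp_all add: sum.delta)
  qed
  have s3: "(\<Sum>z\<in>C. d x z * f z) = f x" "(\<Sum>z\<in>C. f z * d z x) = f x" if "x\<in>C" for x f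
  proof -
    have "\<And>z. d x z * f z = (if z = x then f x else 0)" "\<And>z. f z * d z x = (if z = x then f x else 0)" by (auto simp add: d_def)
    then show "(\<Sum>z\<in>C. d x z * f z) = f x" "(\<Sum>z\<in>C. f z * d z x) = f x" using fin that by (simp_all add: sum.delta)
  qed
  have col: "(\<Sum>z\<in>C. M z y) = N/n" if "y\<in>C" for y
    using row[OF that] sym that by (metis (no_types, lifting) sum.cong)
  have RR: "(\<Sum>z\<in>C. R x z * R z y) = R x y" if "x\<in>C" "y\<in>C" for x y
  proof -
    have "(\<Sum>z\<in>C. R x z * R z y) = (\<Sum>z\<in>C. d x z * d z y + p*d x z - q*(d x z * M z y) + p*d z y + p^2
        - p*q*M z y - q*(M x z * d z y) - p*q*M x z + q^2*(M x z * M z y))"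
      unfolding R_def by (intro sum.cong refl) (simp add: algebra_simps power2_eq_square)
    also have "\<dots> = d x y + p - q * M x y + p + N*p^2 - p*q*(N/n) - q*M x y - p*q*(N/n) + q^2*(al*(1 + 2*M x y))"
      by (simp add: sum.distrib sum_subtractf sum_distrib_left[symmetric] s1 s2 s3 that sq row col cardC)
    also have "\<dots> = R x y + (p + N*p^2 - 2*p*q*N/n + q^2*al) + (2*q^2*al - q)*M x y"
      unfolding R_def by (simp add: algebra_simps)
    also have "\<dots> = R x y" using pq qal by (simp add: power2_eq_square)
    finally show ?thesis .
  qed
  have Rsym: "R x y = R y x" if "x\<in>C" "y\<in>C" for x y
    unfolding R_def d_def using sym[OF that] by auto
  have Rdiag: "R x x = 1/N" if "x\<in>C" for x
  proof -
    have "R x x = 1 + p - q" unfolding R_def d_def using diag[OF that] by simp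
    also have "\<dots> = 1/N"
    proof -
      have "(1 + p - q)*N = N + n/2 - n*(n+2)/2" unfolding p_def q_def using Npos by (simp add: field_simps)
      also have "\<dots> = 1" using hN by (simp add: field_simps)
      finally show ?thesis using Npos by (simp add: field_simps)
    qed
    finally show ?thesis .
  qed
  have Rrow: "(\<Sum>z\<in>C. R x z) = 0" if "x\<in>C" for x
  proof -
    have "(\<Sum>z\<in>C. R x z) = 1 + N*p - q*(N/n)"
      unfolding R_def by (simp add: sum.distrib sum_subtractf sum_distrib_left[symmetric] s2 that row cardC)
    also have "\<dots> = 0" unfolding p_def q_def using Npos n3 by (simp add: field_simps)
    finally show ?thesis .
  qed
  have Rsq: "(\<Sum>z\<in>C. (R x z)^2) = 1/N" if "x\<in>C" for x
  proof -
    have "(\<Sum>z\<in>C. (R x z)^2) = (\<Sum>z\<in>C. R x z * R z x)"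
      using that Rsym by (intro sum.cong refl) (simp add: power2_eq_square)
    then show ?thesis using RR[OF that that] Rdiag[OF that] by simp
  qed
  have bound: "(R x y)^2 \<le> 1/N^2" if "x\<in>C" "y\<in>C" for x y
  proof -
    have "(R x y)^2 = (\<Sum>z\<in>C. R x z * R z y)^2" using RR[OF that] by simp
    also have "\<dots> \<le> (\<Sum>z\<in>C. (R x z)^2) * (\<Sum>z\<in>C. (R z y)^2)" by (rule Cauchy_Schwarz_ineq_sum)
    also have "(\<Sum>z\<in>C. (R z y)^2) = (\<Sum>z\<in>C. (R y z)^2)"
      using that Rsym by (intro sum.cong refl) simp
    finally show ?thesis using Rsq that by (simp add: power2_eq_square)
  qed
  have tot: "(\<Sum>x\<in>C. \<Sum>y\<in>C. 1/N^2 - (R x y)^2) = 0"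
  proof -
    have "(\<Sum>x\<in>C. \<Sum>y\<in>C. 1/N^2 - (R x y)^2) = (\<Sum>x\<in>C. N/N^2 - 1/N)"
      using Rsq cardC by (intro sum.cong refl) (simp add: sum_subtractf)
    also have "\<dots> = 0" using Npos by (simp add: power2_eq_square)
    finally show ?thesis .
  qed
  have Req: "(R x y)^2 = 1/N^2" if "x\<in>C" "y\<in>C" for x y
  proof -
    have nn1: "0 \<le> (\<Sum>y\<in>C. 1/N^2 - (R u y)^2)" if "u \<in> C" for u
    proof (rule sum_nonneg)
      fix v assume "v \<in> C" then show "0 \<le> 1/N^2 - (R u v)^2" using bound[OF that] by simp
    qed
    have "\<forall>u\<in>C. (\<Sum>y\<in>C. 1/N^2 - (R u y)^2) = 0"
      using iffD1[OF sum_nonneg_eq_0_iff[OF fin nn1] tot] .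
    then have s0: "(\<Sum>y\<in>C. 1/N^2 - (R x y)^2) = 0" using that by blast
    have nn2: "0 \<le> 1/N^2 - (R x v)^2" if "v \<in> C" for v using bound[OF \<open>x\<in>C\<close> that] by simp
    have "\<forall>v\<in>C. 1/N^2 - (R x v)^2 = 0"
      using iffD1[OF sum_nonneg_eq_0_iff[OF fin nn2] s0] .
    then have "1/N^2 - (R x y)^2 = 0" using that by blast
    then show ?thesis by simp
  qed
  define \<sigma> where "\<sigma> x y = N * R x y" for x y
  have sig1: "\<sigma> x y = 1 \<or> \<sigma> x y = -1" if "x\<in>C" "y\<in>C" for x y
  proof -
    have "(\<sigma> x y)^2 = 1" unfolding \<sigma>_def using Req[OF that] Npos by (simp add: power_mult_distrib)
    then show ?thesis by (simp add: power2_eq_1_iff)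
  qed
  have sigsum: "(\<Sum>z\<in>C. \<sigma> x z * \<sigma> z y) = N * \<sigma> x y" if "x\<in>C" "y\<in>C" for x y
    unfolding \<sigma>_def using RR[OF that] by (simp add: sum_distrib_left[symmetric] mult_ac)
  have sigmul: "\<sigma> x z * \<sigma> z y = \<sigma> x y" if "x\<in>C" "y\<in>C" "z\<in>C" for x y z
  proof -
    have "(\<Sum>z\<in>C. 1 - \<sigma> x y * (\<sigma> x z * \<sigma> z y)) = N - \<sigma> x y * (N * \<sigma> x y)"
      by (simp add: sum_subtractf sum_distrib_left[symmetric] sigsum that cardC)
    also have "\<dots> = 0" using sig1[OF that(1,2)] by auto
    finally have s0: "(\<Sum>z\<in>C. 1 - \<sigma> x y * (\<sigma> x z * \<sigma> z y)) = 0" .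
    have nn: "0 \<le> 1 - \<sigma> x y * (\<sigma> x w * \<sigma> w y)" if w: "w\<in>C" for w
      using sig1[OF \<open>x\<in>C\<close> w] sig1[OF w \<open>y\<in>C\<close>] sig1[OF \<open>x\<in>C\<close> \<open>y\<in>C\<close>] by auto
    have "\<forall>w\<in>C. 1 - \<sigma> x y * (\<sigma> x w * \<sigma> w y) = 0"
      using iffD1[OF sum_nonneg_eq_0_iff[OF fin nn] s0] .
    then have "1 - \<sigma> x y * (\<sigma> x z * \<sigma> z y) = 0" using that by blast
    then show ?thesis using sig1[OF that(1,2)] by auto
  qed
  have Cne: "C \<noteq> {}" using cardC Npos by auto
  then obtain x0 where x0: "x0 \<in> C" by blast
  define \<epsilon> where "\<epsilon> z = \<sigma> x0 z" for z
  have sigeps: "\<sigma> x y = \<epsilon> x * \<epsilon> y" if "x\<in>C" "y\<in>C" for x y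
  proof -
    have "\<sigma> x0 x * \<sigma> x y = \<sigma> x0 y" using sigmul[OF x0 that(2) that(1)] .
    then show ?thesis unfolding \<epsilon>_def using sig1[OF x0 that(1)] by auto
  qed
  show ?thesis
  proof (intro exI conjI ballI)
    fix x assume "x\<in>C" then show "\<epsilon> x = 1 \<or> \<epsilon> x = -1" unfolding \<epsilon>_def using sig1 x0 by blast
  next
    show "(\<Sum>x\<in>C. \<epsilon> x) = 0" unfolding \<epsilon>_def \<sigma>_def using Rrow[OF x0] by (simp add: sum_distrib_left[symmetric])
  next
    fix x y assume xy: "x\<in>C" "y\<in>C"
    have "R x y = \<epsilon> x * \<epsilon> y / N" using sigeps[OF xy] Npos unfolding \<sigma>_def by (simp add: field_simps)
    then have "q * M x y = d x y + p - \<epsilon> x * \<epsilon> y / N" unfolding R_def by simp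
    moreover have q0: "q > 0" unfolding q_def using Npos n3 by simp
    ultimately have "M x y = (d x y + p - \<epsilon> x * \<epsilon> y / N) / q"
      by (simp add: eq_divide_eq mult.commute)
    also have "\<dots> = 1/n + 2*al*(d x y - (1 + \<epsilon> x * \<epsilon> y)/N)"
    proof -
      have i1: "(d x y + p - \<epsilon> x * \<epsilon> y / N) / q = (d x y + p - \<epsilon> x * \<epsilon> y / N) * (2*al)"
      proof -
        have "1/q = 2*al" using qal q0 by (simp add: field_simps)
        then show ?thesis by (metis divide_inverse inverse_eq_divide)
      qed
      have i2: "2*al*p = 1/(n+2)" unfolding al p_def using Npos nn0 n3 by (simp add: field_simps)
      have i3: "2*al/N = 2/(n*(n+2))" unfolding al using Npos nn0 n3 by simp
      have i4: "1/n - 2/(n*(n+2)) = 1/(n+2)"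
      proof -
        have "n*n > 0" using n3 by simp
        then have "n*n + n*2 \<noteq> 0" "n \<noteq> 0" "n + 2 \<noteq> 0" using n3 by linarith+
        then show ?thesis by (simp add: field_simps)
      qed
      have "(d x y + p - \<epsilon> x * \<epsilon> y / N) * (2*al) = 2*al*d x y + 2*al*p - (2*al/N) * (\<epsilon> x * \<epsilon> y)"
        by (simp add: algebra_simps)
      also have "\<dots> = 2*al*d x y + (1/n - 2/(n*(n+2))) - (2*al/N) * (\<epsilon> x * \<epsilon> y)" using i2 i4 by simp
      also have "\<dots> = 2*al*d x y + 1/n - 2*al/N - (2*al/N) * (\<epsilon> x * \<epsilon> y)" using i3 by simp
      also have "\<dots> = 1/n + 2*al*(d x y - (1 + \<epsilon> x * \<epsilon> y)/N)" by (simp add: algebra_simps add_divide_distrib)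
      finally show ?thesis using i1 by simp
    qed
    finally show "M x y = 1/n + 2*al*((if x = y then 1 else 0) - (1 + \<epsilon> x * \<epsilon> y)/N)" unfolding d_def .
  qed
qed



lemma dvd_coprime_unit: "(b::int) dvd a^2 \<Longrightarrow> coprime a b \<Longrightarrow> b > 0 \<Longrightarrow> b = 1"
  by (meson coprime_absorb_left coprime_commute coprime_power_right_iff
    int_one_le_iff_zero_less order_class.order_eq_iff zdvd_imp_le)

lemma sq_gap: "9 < (k::int)^2 \<Longrightarrow> k^2 < 16 \<Longrightarrow> False"
proof -
  assume a: "9 < k^2" "k^2 < 16"
  have "k^2 = \<bar>k\<bar>^2" by simp
  show False
  proof (cases "\<bar>k\<bar> \<le> 3")
    case True
    then have "\<bar>k\<bar>^2 \<le> 3^2" by (intro power_mono) auto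
    then show False using a by simp
  next
    case False
    then have "4^2 \<le> \<bar>k\<bar>^2" by (intro power_mono) auto
    then show False using a by simp
  qed
qed

lemma nosq: "(k::int)^2 * (n-2) = n*(n+2) \<Longrightarrow> n \<ge> 3 \<Longrightarrow> False"
proof -
  assume e: "k^2 * (n-2) = n*(n+2)" and n3: "n \<ge> 3"
  define x where "x = k^2"
  have e': "x * (n-2) = n*(n+2)" using e unfolding x_def .
  show False
  proof (cases "n \<le> 10")
    case True
    then have "n = 3 \<or> n = 4 \<or> n = 5 \<or> n = 6 \<or> n = 7 \<or> n = 8 \<or> n = 9 \<or> n = 10" using n3 by arith
    then have "9 < x \<and> x < 16" using e' by auto
    then show False using sq_gap unfolding x_def by blast
  next
    case False
    have p: "n - 2 > 0" using n3 by simp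
    have "(n+4)*(n-2) < x*(n-2)" using e' False by (simp add: algebra_simps)
    then have l: "n+4 < x" using p by (simp add: mult_less_cancel_right)
    have "x*(n-2) < (n+5)*(n-2)" using e' False by (simp add: algebra_simps)
    then have u: "x < n+5" using p by (simp add: mult_less_cancel_right)
    show False using l u by simp
  qed
qed

lemma introot:
  fixes w T K :: real
  assumes w: "w \<in> \<rat>" and T: "T \<in> \<int>" and K: "K \<in> \<int>" and e: "w^2 + T*w = K"
  shows "w \<in> \<int>"
proof -
  obtain a b where ab: "w = of_int a / of_int b" "b > 0" "coprime a b" using w by (rule Rats_cases')
  obtain t where t: "T = of_int t" using T by (rule Ints_cases)
  obtain k where k: "K = of_int k" using K by (rule Ints_cases)
  have b0: "(of_int b :: real) \<noteq> 0" using ab by simp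
  have "(of_int a/of_int b)^2 + of_int t * (of_int a / of_int b) = (of_int k :: real)" using e ab t k by simp
  then have "(of_int a)^2 + of_int t * of_int a * of_int b = (of_int k * (of_int b)^2 :: real)"
    using b0 by (simp add: field_simps power2_eq_square)
  then have "a^2 + t*a*b = k*b^2" by (metis of_int_eq_iff of_int_add of_int_mult of_int_power)
  then have "a^2 = b*(k*b - t*a)" by (simp add: algebra_simps power2_eq_square)
  then have "b dvd a^2" by simp
  then have "b = 1" using ab dvd_coprime_unit by blast
  then show ?thesis using ab by simp
qed



lemma geg2: "real n \<ge> 2 \<Longrightarrow> gegenbauer n 2 t = (real n * t^2 - 1)/(real n - 1)"
  by (simp add: numeral_2_eq_2 power2_eq_square)

lemma geg3: "real n \<ge> 2 \<Longrightarrow> gegenbauer n 3 t = t*((real n + 2) * t^2 - 3)/(real n - 1)"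
  apply (simp add: numeral_3_eq_3 numeral_2_eq_2 power2_eq_square)
  apply (simp add: field_simps)
  done

lemma geg4: "real n \<ge> 2 \<Longrightarrow> gegenbauer n 4 t = ((real n + 2)*(real n+4)*t^4 - 6*(real n + 2)*t^2 + 3)/((real n - 1)*(real n + 1))"
proof -
  assume h: "real n \<ge> 2"
  define r where "r = real n"
  have r1: "r - 1 \<noteq> 0" "r + 1 \<noteq> 0" using h unfolding r_def by auto
  have "gegenbauer n 4 t = (real (2*2+n) * t * gegenbauer n 3 t - real (2+1) * gegenbauer n 2 t) / (real (2+n) - 1)"
    by (simp add: numeral_3_eq_3 numeral_2_eq_2 eval_nat_numeral(2))
  also have "\<dots> = ((r+4) * t * (t*((r + 2) * t^2 - 3)/(r - 1)) - 3 * ((r * t^2 - 1)/(r - 1))) / (r + 1)"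
    using h unfolding r_def by (simp add: geg3 geg2 algebra_simps)
  also have "\<dots> = (((r+4) * t * (t*((r + 2) * t^2 - 3)) - 3 * (r * t^2 - 1))/(r - 1)) / (r + 1)"
    by (simp add: diff_divide_distrib)
  also have "\<dots> = ((r+4) * t * (t*((r + 2) * t^2 - 3)) - 3 * (r * t^2 - 1))/((r - 1)*(r+1))"
    by simp
  also have "(r+4) * t * (t*((r + 2) * t^2 - 3)) - 3 * (r * t^2 - 1) = (r + 2)*(r+4)*t^4 - 6*(r + 2)*t^2 + 3"
    by (simp add: algebra_simps power2_eq_square power4_eq_xxxx)
  finally show ?thesis unfolding r_def .
qed

lemma mom2w:
  fixes C :: "(real^'n) set"
  shows "(\<Sum>x\<in>C. \<Sum>y\<in>C. f x * f y * (x \<bullet> y)^2) = (\<Sum>i\<in>UNIV. \<Sum>j\<in>UNIV. (\<Sum>x\<in>C. f x * (x$i*x$j))^2)"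
proof -
  have "(\<Sum>x\<in>C. \<Sum>y\<in>C. f x * f y * (x \<bullet> y)^2) = (\<Sum>x\<in>C. \<Sum>y\<in>C. \<Sum>i\<in>UNIV. \<Sum>j\<in>UNIV. (f x * (x$i*x$j))*(f y * (y$i*y$j)))"
    by (simp add: inner_vec_def power2_eq_square sum_product sum_distrib_left mult_ac)
  also have "\<dots> = (\<Sum>i\<in>UNIV. \<Sum>j\<in>UNIV. \<Sum>x\<in>C. \<Sum>y\<in>C. (f x * (x$i*x$j))*(f y * (y$i*y$j)))" by (rule swap4)
  also have "\<dots> = (\<Sum>i\<in>UNIV. \<Sum>j\<in>UNIV. (\<Sum>x\<in>C. f x * (x$i*x$j))^2)"
    by (simp add: power2_eq_square sum_product)
  finally show ?thesis .
qed

lemma S2_from: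
  fixes C :: "(real^'n) set"
  assumes n2: "real CARD('n) \<ge> 2"
    and z: "(\<Sum>x\<in>C. \<Sum>y\<in>C. gegenbauer CARD('n) 2 (x \<bullet> y)) = 0"
  shows "(\<Sum>x\<in>C. \<Sum>y\<in>C. (x \<bullet> y)^2) = real (card C)^2 / real CARD('n)"
proof -
  define n where "n = real CARD('n)"
  define S where "S = (\<Sum>x\<in>C. \<Sum>y\<in>C. (x \<bullet> y)^2)"
  have "(\<Sum>x\<in>C. \<Sum>y\<in>C. gegenbauer CARD('n) 2 (x \<bullet> y)) = (\<Sum>x\<in>C. \<Sum>y\<in>C. (n * (x \<bullet> y)^2 - 1)/(n - 1))"
    using n2 unfolding n_def by (simp add: geg2)
  also have "\<dots> = (n * S - real (card C) * real (card C))/(n-1)"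
    unfolding S_def by (simp add: sum_divide_distrib[symmetric] sum_subtractf sum_distrib_left[symmetric])
  finally have "(n * S - real (card C) * real (card C))/(n-1) = 0" using z by simp
  then have "n * S = real (card C)^2" using n2 unfolding n_def by (simp add: power2_eq_square)
  then show ?thesis unfolding S_def n_def using n2 by (simp add: field_simps)
qed

lemma S4_from:
  fixes C :: "(real^'n) set"
  assumes n2: "real CARD('n) \<ge> 2"
    and S2: "(\<Sum>x\<in>C. \<Sum>y\<in>C. (x \<bullet> y)^2) = real (card C)^2 / real CARD('n)"
    and z: "(\<Sum>x\<in>C. \<Sum>y\<in>C. gegenbauer CARD('n) 4 (x \<bullet> y)) = 0"
  shows "(\<Sum>x\<in>C. \<Sum>y\<in>C. (x \<bullet> y)^4) = 3 * real (card C)^2 / (real CARD('n) * (real CARD('n) + 2))"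
proof -
  define n where "n = real CARD('n)"
  define N where "N = real (card C)"
  define S where "S = (\<Sum>x\<in>C. \<Sum>y\<in>C. (x \<bullet> y)^2)"
  define S4 where "S4 = (\<Sum>x\<in>C. \<Sum>y\<in>C. (x \<bullet> y)^4)"
  have "(\<Sum>x\<in>C. \<Sum>y\<in>C. gegenbauer CARD('n) 4 (x \<bullet> y)) = (\<Sum>x\<in>C. \<Sum>y\<in>C. ((n + 2)*(n+4)*(x \<bullet> y)^4 - 6*(n + 2)*(x \<bullet> y)^2 + 3)/((n - 1)*(n + 1)))"
    using n2 unfolding n_def by (simp add: geg4)
  also have "\<dots> = ((n + 2)*(n+4)*S4 - 6*(n + 2)*S + 3*(N*N))/((n - 1)*(n + 1))"
    unfolding S_def S4_def N_def
    by (simp add: sum_divide_distrib[symmetric] sum_subtractf sum.distrib sum_distrib_left[symmetric])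
  finally have "((n + 2)*(n+4)*S4 - 6*(n + 2)*S + 3*(N*N))/((n - 1)*(n + 1)) = 0" using z by simp
  then have e: "(n + 2)*(n+4)*S4 - 6*(n + 2)*S + 3*(N*N) = 0" using n2 unfolding n_def by simp
  have S': "S = N*N/n" using S2 unfolding S_def N_def n_def by (simp add: power2_eq_square)
  have nsq: "n * n > 0" using n2 unfolding n_def by simp
  have n0: "n \<noteq> 0" "n + 2 \<noteq> 0" "n * n + n * 2 \<noteq> 0" using n2 nsq unfolding n_def by linarith+
  have "(n+2)*(n+4)*S4 = 6*(n+2)*(N*N/n) - 3*(N*N)" using e unfolding S' by linarith
  also have "\<dots> = (n+2)*(n+4)*(3*(N*N)/(n*(n+2)))"
    using n0 by (simp add: field_simps)
  finally have "(n+2)*(n+4)*S4 = (n+2)*(n+4)*(3*(N*N)/(n*(n+2)))" .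
  moreover have a0: "(n+2)*(n+4) \<noteq> 0" using n2 unfolding n_def by simp
  ultimately have "S4 = 3*(N*N)/(n*(n+2))" using mult_left_cancel[OF a0] by blast
  then show ?thesis unfolding S4_def N_def n_def by (simp add: power2_eq_square)
qed



lemma no_7: "(m::nat)*m + 2 = 7*m \<Longrightarrow> False"
proof -
  assume e: "m*m + 2 = 7*m"
  define k where "k = 2 * int m - 7"
  have "int (m*m + 2) = int (7*m)" using e by simp
  then have "(int m)*(int m) + 2 = 7 * int m" by simp
  then have k41: "k^2 = 41" unfolding k_def by (simp add: power2_eq_square algebra_simps)
  show False
  proof (cases "\<bar>k\<bar> \<le> 6")
    case True
    then have "\<bar>k\<bar>^2 \<le> 6^2" by (intro power_mono) auto
    then show False using k41 by simp
  next
    case False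
    then have "7^2 \<le> \<bar>k\<bar>^2" by (intro power_mono) auto
    then show False using k41 by simp
  qed
qed

lemma no_design:
  fixes C :: "(real^'n) set"
  assumes fin: "finite C" and sph: "C \<subseteq> sphere 0 1"
    and z2: "(\<Sum>x\<in>C. \<Sum>y\<in>C. gegenbauer CARD('n) 2 (x \<bullet> y)) = 0"
    and z4: "(\<Sum>x\<in>C. \<Sum>y\<in>C. gegenbauer CARD('n) 4 (x \<bullet> y)) = 0"
    and hC: "2 * card C = CARD('n)*(CARD('n)+1) + 2"
    and n3n: "CARD('n) \<ge> 3"
  shows False
proof -
  define n where "n = real CARD('n)"
  define N where "N = real (card C)"
  have n3: "n \<ge> 3" unfolding n_def using n3n by simp
  have n2: "real CARD('n) \<ge> 2" using n3n by simp
  have hN: "2*N = n*(n+1)+2" unfolding N_def n_def using arg_cong[OF hC, of real] by (simp add: algebra_simps)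
  have "3*4 \<le> n*(n+1)" using n3 by (intro mult_mono) auto
  then have N7: "N \<ge> 7" using hN by linarith
  then have Npos: "N > 0" by linarith
  have S2: "(\<Sum>x\<in>C. \<Sum>y\<in>C. (x \<bullet> y)^2) = real (card C)^2 / real CARD('n)"
    by (rule S2_from[OF n2 z2])
  have S4: "(\<Sum>x\<in>C. \<Sum>y\<in>C. (x \<bullet> y)^4) = 3 * real (card C)^2 / (real CARD('n) * (real CARD('n) + 2))"
    by (rule S4_from[OF n2 S2 z4])
  define al where "al = N/(n*(n+2))"
  have m2: "\<And>i j. (\<Sum>x\<in>C. x$i*x$j) = N/n * dl i j"
    using mom2[OF fin sph S2] unfolding N_def n_def .
  have m4: "\<And>i j k l. (\<Sum>x\<in>C. x$i*x$j*x$k*x$l) = al * (dl i j * dl k l + dl i k * dl j l + dl i l * dl j k)"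
    using mom4[OF fin sph S4] unfolding al_def N_def n_def .
  have F2C: "\<And>u v. (\<Sum>x\<in>C. (x \<bullet> u)*(x \<bullet> v)) = N/n * (u \<bullet> v)"
    by (rule F2) (rule m2)
  have F4C: "\<And>u v. (\<Sum>x\<in>C. (x \<bullet> u)^2*(x \<bullet> v)^2) = al * ((u \<bullet> u)*(v \<bullet> v) + 2*(u \<bullet> v)^2)"
    by (rule F4) (rule m4)
  have unit: "x \<bullet> x = 1" if "x \<in> C" for x
    using sph that by (simp add: subset_iff norm_eq_1[symmetric])
    have ex: "\<exists>\<epsilon>. (\<forall>x\<in>C. \<epsilon> x = 1 \<or> \<epsilon> x = -1) \<and> (\<Sum>x\<in>C. \<epsilon> x) = 0 \<and>
     (\<forall>x\<in>C. \<forall>y\<in>C. (x \<bullet> y)^2 = 1/n + 2*al*((if x = y then 1 else 0) - (1 + \<epsilon> x * \<epsilon> y)/N))"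
    proof (rule comb[OF fin N_def[symmetric] n3 hN al_def])
      fix x y assume "x\<in>C" "y\<in>C" then show "(x \<bullet> y)^2 = (y \<bullet> x)^2" by (simp add: inner_commute)
    next
      fix x assume "x\<in>C" then show "(x \<bullet> x)^2 = 1" using unit by simp
    next
      fix x assume x: "x\<in>C"
      have "(\<Sum>z\<in>C. (x \<bullet> z)^2) = (\<Sum>z\<in>C. (z \<bullet> x)*(z \<bullet> x))" by (simp add: inner_commute power2_eq_square)
      also have "\<dots> = N/n" using F2C[of x x] unit[OF x] by simp
      finally show "(\<Sum>z\<in>C. (x \<bullet> z)^2) = N/n" .
    next
      fix x y assume x: "x\<in>C" and y: "y\<in>C"
      have "(\<Sum>z\<in>C. (x \<bullet> z)^2 * (z \<bullet> y)^2) = (\<Sum>z\<in>C. (z \<bullet> x)^2*(z \<bullet> y)^2)" by (simp add: inner_commute)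
      also have "\<dots> = al*(1 + 2*(x \<bullet> y)^2)" using F4C[of x y] unit[OF x] unit[OF y] by simp
      finally show "(\<Sum>z\<in>C. (x \<bullet> z)^2 * (z \<bullet> y)^2) = al*(1 + 2*(x \<bullet> y)^2)" .
    qed
  from ex obtain \<epsilon> where A: "(\<forall>x\<in>C. \<epsilon> x = 1 \<or> \<epsilon> x = -1) \<and> (\<Sum>x\<in>C. \<epsilon> x) = 0 \<and>
     (\<forall>x\<in>C. \<forall>y\<in>C. (x \<bullet> y)^2 = 1/n + 2*al*((if x = y then 1 else 0) - (1 + \<epsilon> x * \<epsilon> y)/N))"
    by (rule exE)
  have eps1: "\<forall>x\<in>C. \<epsilon> x = 1 \<or> \<epsilon> x = -1" using A by (rule conjunct1)
  have epssum: "(\<Sum>x\<in>C. \<epsilon> x) = 0" using A[THEN conjunct2, THEN conjunct1] .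
  have Mform: "\<forall>x\<in>C. \<forall>y\<in>C. (x \<bullet> y)^2 = 1/n + 2*al*((if x = y then 1 else 0) - (1 + \<epsilon> x * \<epsilon> y)/N)"
    using A[THEN conjunct2, THEN conjunct2] .
  have eps2: "\<epsilon> x * \<epsilon> x = 1" if "x\<in>C" for x using eps1 that by auto
  have Z: "(\<Sum>x\<in>C. \<Sum>y\<in>C. \<epsilon> x * \<epsilon> y * (x \<bullet> y)^2) = 0"
  proof -
    have pt: "\<epsilon> x * \<epsilon> y * (x \<bullet> y)^2 = (1/n) * (\<epsilon> x * \<epsilon> y) + 2*al*(if x = y then 1 else 0) - (2*al/N)*(\<epsilon> x * \<epsilon> y) - 2*al/N"
      if "x\<in>C" "y\<in>C" for x y
    proof -
      have "\<epsilon> x * \<epsilon> y * (x \<bullet> y)^2 = \<epsilon> x * \<epsilon> y * (1/n + 2*al*((if x = y then 1 else 0) - (1 + \<epsilon> x * \<epsilon> y)/N))"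
        using Mform that by simp
      also have "\<dots> = (1/n) * (\<epsilon> x * \<epsilon> y) + 2*al*(\<epsilon> x * \<epsilon> y * (if x = y then 1 else 0)) - (2*al/N)*(\<epsilon> x * \<epsilon> y) - (2*al/N)*((\<epsilon> x * \<epsilon> y)*(\<epsilon> x * \<epsilon> y))"
        by (simp add: algebra_simps diff_divide_distrib add_divide_distrib)
      also have "(\<epsilon> x * \<epsilon> y)*(\<epsilon> x * \<epsilon> y) = 1" using eps2[OF that(1)] eps2[OF that(2)]
        by (metis mult.assoc mult.commute mult_1)
      also have "\<epsilon> x * \<epsilon> y * (if x = y then 1 else 0) = (if x = y then 1 else 0)" using eps2[OF that(1)] by auto
      finally show ?thesis by simp
    qed
    have ee: "(\<Sum>x\<in>C. \<Sum>y\<in>C. \<epsilon> x * \<epsilon> y) = 0"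
      using epssum by (simp add: sum_product[symmetric])
    have dd: "(\<Sum>x\<in>C. \<Sum>y\<in>C. (if x = y then 1 else 0::real)) = N"
      unfolding N_def using fin by (simp add: sum.delta)
    have "(\<Sum>x\<in>C. \<Sum>y\<in>C. \<epsilon> x * \<epsilon> y * (x \<bullet> y)^2)
        = (\<Sum>x\<in>C. \<Sum>y\<in>C. (1/n) * (\<epsilon> x * \<epsilon> y) + 2*al*(if x = y then 1 else 0) - (2*al/N)*(\<epsilon> x * \<epsilon> y) - 2*al/N)"
      using pt by (intro sum.cong refl) auto
    also have "\<dots> = (1/n) * (\<Sum>x\<in>C. \<Sum>y\<in>C. \<epsilon> x * \<epsilon> y) + 2*al*(\<Sum>x\<in>C. \<Sum>y\<in>C. (if x = y then 1 else 0::real))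
        - (2*al/N)*(\<Sum>x\<in>C. \<Sum>y\<in>C. \<epsilon> x * \<epsilon> y) - (2*al/N)*(N*N)"
      unfolding N_def by (simp add: sum.distrib sum_subtractf sum_distrib_left)
    also have "\<dots> = 0" unfolding ee dd using Npos by simp
    finally show ?thesis .
  qed
  have epsmom: "(\<Sum>x\<in>C. \<epsilon> x * (x$i*x$j)) = 0" for i j
  proof -
    have "(\<Sum>i\<in>UNIV. \<Sum>j\<in>UNIV. (\<Sum>x\<in>C. \<epsilon> x * (x$i*x$j))^2) = 0"
      using Z mom2w[of \<epsilon> C] by simp
    then show ?thesis by (rule sq_sum_zero)
  qed
  define P where "P = {x\<in>C. \<epsilon> x = 1}"
  have finP: "finite P" unfolding P_def using fin by simp
  have PC: "P \<subseteq> C" unfolding P_def by auto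
  have sumP: "(\<Sum>x\<in>P. g x) = (\<Sum>x\<in>C. (1 + \<epsilon> x)/2 * g x)" for g :: "real^'n \<Rightarrow> real"
  proof -
    have "(\<Sum>x\<in>P. g x) = (\<Sum>x\<in>C. if \<epsilon> x = 1 then g x else 0)"
      unfolding P_def using fin by (rule sum.inter_filter)
    also have "\<dots> = (\<Sum>x\<in>C. (1 + \<epsilon> x)/2 * g x)"
      using eps1 by (intro sum.cong refl) auto
    finally show ?thesis .
  qed
  have mP: "(\<Sum>x\<in>P. x$i*x$j) = N/(2*n) * dl i j" for i j
  proof -
    have "(\<Sum>x\<in>P. x$i*x$j) = (1/2)*(\<Sum>x\<in>C. x$i*x$j) + (1/2)*(\<Sum>x\<in>C. \<epsilon> x * (x$i*x$j))"
      unfolding sumP by (simp add: sum.distrib sum_distrib_left algebra_simps add_divide_distrib)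
    then show ?thesis using m2 epsmom by simp
  qed
  have F2P: "\<And>u v. (\<Sum>x\<in>P. (x \<bullet> u)*(x \<bullet> v)) = N/(2*n) * (u \<bullet> v)"
    by (rule F2) (rule mP)
  have cardP: "real (card P) = N/2"
  proof -
    have "real (card P) = (\<Sum>x\<in>P. 1)" by simp
    also have "\<dots> = (1/2)*(\<Sum>x\<in>C. 1) + (1/2)*(\<Sum>x\<in>C. \<epsilon> x)"
      unfolding sumP by (simp add: sum.distrib sum_distrib_left add_divide_distrib)
    finally show ?thesis using epssum unfolding N_def by simp
  qed
  define \<beta> where "\<beta> = (n-2)/(n*(n+2))"
  have bpos: "\<beta> > 0" unfolding \<beta>_def using n3 by simp
  have nsq: "n*n > 0" using n3 by simp
  have nn0: "n \<noteq> 0" "n + 2 \<noteq> 0" "n - 2 \<noteq> 0" "n*n + n*2 \<noteq> 0" using n3 nsq by linarith+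
  have beta: "(x \<bullet> y)^2 = \<beta>" if "x\<in>P" "y\<in>P" "x \<noteq> y" for x y
  proof -
    have "(x \<bullet> y)^2 = 1/n + 2*al*(0 - 2/N)" using Mform that unfolding P_def by auto
    also have "\<dots> = 1/n - 4/(n*(n+2))" unfolding al_def using Npos nn0 by (simp add: field_simps)
    also have "\<dots> = \<beta>"
    proof -
      have "1/n = (n+2)/(n*(n+2))" using nn0(2) by simp
      then have "1/n - 4/(n*(n+2)) = ((n+2) - 4)/(n*(n+2))" by (simp only: diff_divide_distrib)
      moreover have "(n+2) - 4 = n - 2" by simp
      ultimately show ?thesis unfolding \<beta>_def by (simp only:)
    qed
    finally show ?thesis .
  qed
  have unitP: "x \<bullet> x = 1" if "x\<in>P" for x using unit PC that by auto
  have "card P \<ge> 2" using cardP N7 by linarith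
  then obtain x where x: "x \<in> P" by fastforce
  have "card (P - {x}) \<ge> 1" using \<open>card P \<ge> 2\<close> x finP by simp
  then have "P - {x} \<noteq> {}" by (metis card.empty not_one_le_zero)
  then obtain y where y: "y \<in> P" "y \<noteq> x" by blast
  define a where "a = x \<bullet> y"
  have a2: "a^2 = \<beta>" unfolding a_def using beta[OF x y(1)] y(2) by auto
  have a0: "a \<noteq> 0" using a2 bpos by auto
  define Q where "Q = P - {x, y}"
  define t where "t z = (z \<bullet> x)*(z \<bullet> y)/\<beta>" for z
  have tZ: "t z \<in> \<int>" if "z \<in> Q" for z
  proof -
    have z: "z \<in> P" "z \<noteq> x" "z \<noteq> y" using that unfolding Q_def by auto
    have "((z \<bullet> x)*(z \<bullet> y))^2 = \<beta>^2" using beta[OF z(1) x z(2)] beta[OF z(1) y(1) z(3)]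
      by (simp add: power_mult_distrib power2_eq_square[of \<beta>])
    then have "(t z)^2 = 1" unfolding t_def using bpos by (simp add: power_divide)
    then have "t z = 1 \<or> t z = -1" by (simp add: power2_eq_1_iff)
    then show ?thesis by auto
  qed
  define T where "T = (\<Sum>z\<in>Q. t z)"
  have TZ: "T \<in> \<int>" unfolding T_def using tZ by (intro Ints_sum) auto
  have finQ: "finite Q" unfolding Q_def using finP by simp
  have sumQ: "(\<Sum>z\<in>Q. (z \<bullet> x)*(z \<bullet> y)) = \<beta> * T"
    unfolding T_def t_def using bpos by (simp add: sum_distrib_left)
  have split: "(\<Sum>z\<in>P. (z \<bullet> x)*(z \<bullet> y)) = 2*a + \<beta> * T"
  proof -
    have sub: "{x, y} \<subseteq> P" using x y by auto
    have "(\<Sum>z\<in>P. (z \<bullet> x)*(z \<bullet> y)) = (\<Sum>z\<in>Q. (z \<bullet> x)*(z \<bullet> y)) + (\<Sum>z\<in>{x,y}. (z \<bullet> x)*(z \<bullet> y))"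
      unfolding Q_def using sum.subset_diff[OF sub finP] .
    also have "(\<Sum>z\<in>{x,y}. (z \<bullet> x)*(z \<bullet> y)) = (x \<bullet> x)*(x \<bullet> y) + (y \<bullet> x)*(y \<bullet> y)"
      using y(2) by simp
    also have "\<dots> = 2*a" unfolding a_def using unitP[OF x] unitP[OF y(1)] by (simp add: inner_commute)
    finally show ?thesis using sumQ by simp
  qed
  define c where "c = N/(2*n) - 2"
  have cT: "\<beta> * T = c * a" using split F2P[of x y] unfolding c_def a_def by (simp add: algebra_simps)
  have c0: "c \<noteq> 0"
  proof
    assume "c = 0"
    then have "N = 4*n" unfolding c_def using nn0 by (simp add: field_simps)
    then have "n*n + 2 = 7*n" using hN by (simp add: algebra_simps)
    then have "real (CARD('n)*CARD('n) + 2) = real (7*CARD('n))" unfolding n_def by simp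
    then have "CARD('n)*CARD('n) + 2 = 7*CARD('n)" by (simp only: of_nat_eq_iff)
    then show False by (rule no_7)
  qed
  define w where "w = 1/a"
  have Tw: "T = c * w"
  proof -
    have "a * a * T = c * a" using cT a2 by (simp add: power2_eq_square)
    then have "a * T = c" using a0 by (simp add: mult.assoc)
    then show ?thesis unfolding w_def using a0 by (simp add: field_simps)
  qed
  have wQ: "w \<in> \<rat>"
  proof -
    have "c \<in> \<rat>" unfolding c_def N_def n_def by simp
    moreover have "T \<in> \<rat>" using TZ Ints_subset_Rats by blast
    ultimately show ?thesis using Tw c0 by (metis Rats_divide nonzero_mult_div_cancel_left)
  qed
  have w2: "w^2 = 1/\<beta>" unfolding w_def using a2 by (simp add: power_one_over)
  have eqK: "w^2 + T*w = real (card P) - 1"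
  proof -
    have "w^2 + T*w = (1 + c)/\<beta>" using Tw w2 by (simp add: algebra_simps power2_eq_square divide_inverse)
    also have "\<dots> = N/2 - 1"
    proof -
      have "(1 + c)*(n*(n+2)) = (N/2 - 1)*(n-2)" unfolding c_def using nn0 hN
        by (simp add: field_simps)
      then show ?thesis unfolding \<beta>_def using nn0 bpos by (simp add: field_simps)
    qed
    finally show ?thesis using cardP by simp
  qed
  have KZ: "real (card P) - 1 \<in> \<int>" by simp
  have "w \<in> \<int>" by (rule introot[OF wQ TZ KZ eqK])
  then obtain k where k: "w = of_int k" by (rule Ints_cases)
  have "(of_int k)^2 * (n-2) = n*(n+2)" using w2 k nn0 unfolding \<beta>_def by (simp add: field_simps)
  then have "real_of_int (k^2 * (int CARD('n) - 2)) = real_of_int (int CARD('n) * (int CARD('n) + 2))"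
    unfolding n_def by simp
  then have "k^2 * (int CARD('n) - 2) = int CARD('n) * (int CARD('n) + 2)" by (simp only: of_int_eq_iff)
  moreover have "int CARD('n) \<ge> 3" using n3n by simp
  ultimately show False by (rule nosq)
qed


theorem mainTheorem6:
  assumes "CARD('n::finite) \<ge> 3"
  shows "\<not> (\<exists>C :: (real ^ 'n) set.
            spherical_22_design C \<and> card C = (CARD('n) + 1 choose 2) + 1)"
proof
  assume "\<exists>C :: (real ^ 'n) set. spherical_22_design C \<and> card C = (CARD('n) + 1 choose 2) + 1"
  then obtain C :: "(real ^ 'n) set" where d: "spherical_22_design C" and c: "card C = (CARD('n) + 1 choose 2) + 1"
    by blast
  have ch: "2 * (CARD('n) + 1 choose 2) = CARD('n) * (CARD('n) + 1)"
  proof -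
    have "(CARD('n) + 1 choose 2) = (CARD('n) + 1) * CARD('n) div 2" by (simp add: choose_two)
    moreover have "even ((CARD('n) + 1) * CARD('n))" by simp
    ultimately show ?thesis by (simp add: mult.commute)
  qed
  have hC: "2 * card C = CARD('n)*(CARD('n)+1) + 2" using c ch by simp
  from d have fin: "finite C" and sph: "C \<subseteq> sphere 0 1"
    and z2: "(\<Sum>x\<in>C. \<Sum>y\<in>C. gegenbauer CARD('n) 2 (x \<bullet> y)) = 0"
    and z4: "(\<Sum>x\<in>C. \<Sum>y\<in>C. gegenbauer CARD('n) 4 (x \<bullet> y)) = 0"
    unfolding spherical_22_design_def by auto
  show False by (rule no_design[OF fin sph z2 z4 hC assms])
qed

end
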